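(* Let $m,n,w,d$ be positive integers with $w\le m$. For all positive integers $a,m',w'$ such that $am'\le m$ and $aw'\le w\le aw'+m-am'$, we have $A(m,n,w,d)\ge A(m',an,w',d)$. Consequently, $$C\left(\left\lfloor\frac{m}{w}\right\rfloor,nw,d\right)\le A(m,n,w,d)\le B(mn,nw,d).$$
   Context: $J(m,w)$ denotes the set of binary vectors of length $m$ and Hamming weight $w$. Elements of $J(m,w)^n$ are identified with $m\times n$ binary matrices all of whose columns have weight $w$, with binary Hamming distance. $A(m,n,w,d)$ is the maximum cardinality of a nonempty subset of $J(m,w)^n$ with pairwise Hamming distances at least $2d$. $B(N,W,d)$ is the maximum cardinality of a nonempty subset of $J(N,W)$ with pairwise Hamming distances at least $2d$. $C(q,n,d)$ is the maximum cardinality of a nonempty subset of $[q]^n$, $[q]=\{0,\dots,q-1\}$, with pairwise Hamming distances at least $d$. *)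

theory Defs
  imports Main
begin

definition hamming :: "'a list \<Rightarrow> 'a list \<Rightarrow> nat" where
  "hamming xs ys = card {i. i < length xs \<and> xs ! i \<noteq> ys ! i}"

definition J :: "nat \<Rightarrow> nat \<Rightarrow> bool list set" where
  "J m w = {x. length x = m \<and> count_list x True = w}"

text \<open>J(m,w)^n: m x n binary matrices, given as the list of their n columns,
  each column of weight w.\<close>
definition Jpow :: "nat \<Rightarrow> nat \<Rightarrow> nat \<Rightarrow> bool list list set" where
  "Jpow m n w = {M. length M = n \<and> (\<forall>c\<in>set M. c \<in> J m w)}"

definition mat_dist :: "bool list list \<Rightarrow> bool list list \<Rightarrow> nat" where
  "mat_dist M N = (\<Sum>j<length M. hamming (M ! j) (N ! j))"

definition qwords :: "nat \<Rightarrow> nat \<Rightarrow> nat list set" where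
  "qwords q n = {x. length x = n \<and> (\<forall>a\<in>set x. a < q)}"

text \<open>Maximum cardinality of a nonempty subset of X with pairwise distances
  at least delta (0 if X is empty, by the convention Sup {} = 0 on nat).\<close>
definition max_code :: "'a set \<Rightarrow> ('a \<Rightarrow> 'a \<Rightarrow> nat) \<Rightarrow> nat \<Rightarrow> nat" where
  "max_code X dist delta = Sup (card ` {S. S \<subseteq> X \<and> S \<noteq> {} \<and>
      (\<forall>x\<in>S. \<forall>y\<in>S. x \<noteq> y \<longrightarrow> delta \<le> dist x y)})"

definition A :: "nat \<Rightarrow> nat \<Rightarrow> nat \<Rightarrow> nat \<Rightarrow> nat" where
  "A m n w d = max_code (Jpow m n w) mat_dist (2 * d)"

definition B :: "nat \<Rightarrow> nat \<Rightarrow> nat \<Rightarrow> nat" where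
  "B N W d = max_code (J N W) hamming (2 * d)"

definition C :: "nat \<Rightarrow> nat \<Rightarrow> nat \<Rightarrow> nat" where
  "C q n d = max_code (qwords q n) hamming d"

end

theory Submission
  imports Defs
begin

lemma max_code_le:
  assumes fin: "finite Y" and img: "f ` X \<subseteq> Y" and pos: "0 < \<delta>'" and refl: "\<forall>z. d2 z z = 0"
    and dist: "\<forall>x\<in>X. \<forall>y\<in>X. x \<noteq> y \<longrightarrow> \<delta> \<le> d1 x y \<longrightarrow> \<delta>' \<le> d2 (f x) (f y)"
  shows "max_code X d1 \<delta> \<le> max_code Y d2 \<delta>'"
proof -
  let ?P = "{S. S \<subseteq> X \<and> S \<noteq> {} \<and> (\<forall>x\<in>S. \<forall>y\<in>S. x \<noteq> y \<longrightarrow> \<delta> \<le> d1 x y)}"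
  let ?Q = "{S. S \<subseteq> Y \<and> S \<noteq> {} \<and> (\<forall>x\<in>S. \<forall>y\<in>S. x \<noteq> y \<longrightarrow> \<delta>' \<le> d2 x y)}"
  have finQ: "finite (card ` ?Q)"
    using fin by (intro finite_imageI) (rule finite_subset[of _ "Pow Y"]; auto)
  have key: "card S \<le> Sup (card ` ?Q)" if "S \<in> ?P" for S
  proof -
    from that have S: "S \<subseteq> X" "S \<noteq> {}" "\<forall>x\<in>S. \<forall>y\<in>S. x \<noteq> y \<longrightarrow> \<delta> \<le> d1 x y" by auto
    have inj: "inj_on f S"
    proof (rule inj_onI)
      fix x y assume xy: "x\<in>S" "y\<in>S" "f x = f y"
      show "x = y"
      proof (rule ccontr)
        assume "x \<noteq> y"
        then have "\<delta>' \<le> d2 (f x) (f y)" using dist S xy by blast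
        with xy refl pos show False by simp
      qed
    qed
    have "f ` S \<in> ?Q"
    proof -
      have "\<delta>' \<le> d2 u v" if uv: "u \<in> f ` S" "v \<in> f ` S" "u \<noteq> v" for u v
      proof -
        obtain x y where "x\<in>S" "y\<in>S" "u = f x" "v = f y" using uv by blast
        note xy = this
        have "x \<noteq> y" using xy uv by auto
        moreover have "x \<in> X" "y \<in> X" using xy S(1) by auto
        moreover have "\<delta> \<le> d1 x y" using S(3) xy \<open>x \<noteq> y\<close> by blast
        ultimately show ?thesis using dist xy by blast
      qed
      moreover have "f ` S \<subseteq> Y" using S(1) img by blast
      ultimately show ?thesis using S(2) by auto
    qed
    then have "card (f ` S) \<in> card ` ?Q" by blast
    hence "card (f ` S) \<le> Sup (card ` ?Q)" using finQ by (simp add: le_cSup_finite)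
    thus ?thesis using card_image[OF inj] by simp
  qed
  show ?thesis
  proof (cases "?P = {}")
    case True then show ?thesis unfolding max_code_def by (simp add: Sup_nat_def)
  next
    case False then show ?thesis unfolding max_code_def by (intro cSup_least) (auto intro: key)
  qed
qed

lemma card_filter_sum: "card {i. i < (n::nat) \<and> P i} = (\<Sum>i<n. if P i then 1 else 0::nat)"
proof -
  have "card {i. i < n \<and> P i} = card {i\<in>{..<n}. P i}" by (simp add: lessThan_def conj_commute)
  also have "\<dots> = sum (\<lambda>_. 1::nat) {i\<in>{..<n}. P i}" by simp
  also have "\<dots> = (\<Sum>i<n. if P i then 1 else 0)" by (rule sum.inter_filter) (rule finite_lessThan)
  finally show ?thesis .
qed

lemma hamming_sum: "hamming xs ys = (\<Sum>i<length xs. if xs!i \<noteq> ys!i then 1 else 0)"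
  unfolding hamming_def by (rule card_filter_sum)

lemma hamming_Nil[simp]: "hamming [] ys = 0"
  by (simp add: hamming_def)

lemma hamming_Cons[simp]: "hamming (x#xs) (y#ys) = (if x \<noteq> y then 1 else 0) + hamming xs ys"
  by (simp only: hamming_sum length_Cons sum.lessThan_Suc_shift) simp

lemma hamming_refl[simp]: "hamming xs xs = 0"
  by (simp add: hamming_def)

lemma hamming_append:
  "length xs = length xs' \<Longrightarrow> hamming (xs @ ys) (xs' @ ys') = hamming xs xs' + hamming ys ys'"
proof (induction xs arbitrary: xs')
  case Nil then show ?case by simp
next
  case (Cons x xs) then show ?case by (cases xs') auto
qed

lemma mat_dist_Nil[simp]: "mat_dist [] N = 0"
  by (simp add: mat_dist_def)

lemma mat_dist_Cons[simp]: "mat_dist (c#M) (c'#N) = hamming c c' + mat_dist M N"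
  by (simp only: mat_dist_def length_Cons sum.lessThan_Suc_shift) simp

lemma mat_dist_refl[simp]: "mat_dist M M = 0"
  by (simp add: mat_dist_def)

lemma mat_dist_append:
  "length M1 = length N1 \<Longrightarrow> mat_dist (M1 @ M2) (N1 @ N2) = mat_dist M1 N1 + mat_dist M2 N2"
proof (induction M1 arbitrary: N1)
  case Nil then show ?case by simp
next
  case (Cons x xs) then show ?case by (cases N1) auto
qed

lemma hamming_concat:
  "length M = length N \<Longrightarrow> \<forall>i<length M. length (M!i) = length (N!i) \<Longrightarrow>
   hamming (concat M) (concat N) = mat_dist M N"
proof (induction M arbitrary: N)
  case Nil then show ?case by simp
next
  case (Cons c M)
  then obtain c' N' where N: "N = c' # N'" by (cases N) auto
  have "length c = length c'" using Cons.prems(2) N by force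
  moreover have "\<forall>i<length M. length (M!i) = length (N'!i)" using Cons.prems N by force
  ultimately show ?case using Cons N by (simp add: hamming_append)
qed

lemma length_concat_const: "\<forall>c\<in>set M. length c = k \<Longrightarrow> length (concat M) = length M * k"
  by (induction M) auto

lemma count_concat_const: "\<forall>c\<in>set M. count_list c True = k \<Longrightarrow> count_list (concat M) True = length M * k"
  by (induction M) auto

lemma finite_J: "finite (J m w)"
  unfolding J_def
  by (rule finite_subset[OF _ finite_lists_length_eq[of "UNIV::bool set" m]]) auto

lemma finite_Jpow: "finite (Jpow m n w)"
  unfolding Jpow_def
  by (rule finite_subset[OF _ finite_lists_length_eq[OF finite_J, of m w n]]) auto


primrec blocks :: "nat \<Rightarrow> bool list \<Rightarrow> nat \<Rightarrow> bool list list \<Rightarrow> bool list list" where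
  "blocks a pad 0 M = []"
| "blocks a pad (Suc k) M = (concat (take a M) @ pad) # blocks a pad k (drop a M)"

lemma count_replicate: "count_list (replicate k x) y = (if x = y then k else 0)"
  by (induction k) auto

lemma Jpow_take_drop:
  assumes "M \<in> Jpow m' (a * Suc k) w'"
  shows "take a M \<in> Jpow m' a w'" "drop a M \<in> Jpow m' (a * k) w'"
  using assms unfolding Jpow_def by (auto dest: in_set_takeD in_set_dropD)

lemma blocks_Jpow:
  assumes "length pad = m - a*m'" "count_list pad True = w - a*w'" "a*m' \<le> m" "a*w' \<le> w"
  shows "M \<in> Jpow m' (a*k) w' \<Longrightarrow> blocks a pad k M \<in> Jpow m k w"
proof (induction k arbitrary: M)
  case 0 then show ?case by (simp add: Jpow_def)
next
  case (Suc k)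
  note TD = Jpow_take_drop[OF Suc.prems]
  have "\<forall>c\<in>set (take a M). length c = m'" "\<forall>c\<in>set (take a M). count_list c True = w'"
    "length (take a M) = a"
    using TD(1) unfolding Jpow_def J_def by auto
  then have "length (concat (take a M)) = a * m'" "count_list (concat (take a M)) True = a * w'"
    using length_concat_const[of "take a M" m'] count_concat_const[of "take a M" w'] by simp_all
  then have "concat (take a M) @ pad \<in> J m w" using assms by (simp add: J_def)
  moreover have "blocks a pad k (drop a M) \<in> Jpow m k w" using Suc.IH TD(2) by blast
  ultimately show ?case by (simp add: Jpow_def)
qed

lemma blocks_dist:
  "M \<in> Jpow m' (a*k) w' \<Longrightarrow> N \<in> Jpow m' (a*k) w' \<Longrightarrow>
   mat_dist (blocks a pad k M) (blocks a pad k N) = mat_dist M N"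
proof (induction k arbitrary: M N)
  case 0 then show ?case by (simp add: Jpow_def)
next
  case (Suc k)
  note TM = Jpow_take_drop[OF Suc.prems(1)] and TN = Jpow_take_drop[OF Suc.prems(2)]
  have lM: "\<forall>c\<in>set (take a M). length c = m'" "length (take a M) = a"
    using TM(1) unfolding Jpow_def J_def by auto
  have lN: "\<forall>c\<in>set (take a N). length c = m'" "length (take a N) = a"
    using TN(1) unfolding Jpow_def J_def by auto
  have cc: "hamming (concat (take a M)) (concat (take a N)) = mat_dist (take a M) (take a N)"
  proof (rule hamming_concat)
    show "length (take a M) = length (take a N)" using lM lN by simp
    show "\<forall>i<length (take a M). length (take a M ! i) = length (take a N ! i)"
    proof (intro allI impI)
      fix i assume i: "i < length (take a M)"
      then have "take a M ! i \<in> set (take a M)" "take a N ! i \<in> set (take a N)"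
        using lM lN by (metis nth_mem)+
      then show "length (take a M ! i) = length (take a N ! i)" using lM lN by simp
    qed
  qed
  have lc: "length (concat (take a M)) = length (concat (take a N))"
    using length_concat_const[OF lM(1)] length_concat_const[OF lN(1)] lM(2) lN(2) by simp
  have "mat_dist M N = mat_dist (take a M @ drop a M) (take a N @ drop a N)" by simp
  also have "\<dots> = mat_dist (take a M) (take a N) + mat_dist (drop a M) (drop a N)"
    using lM lN by (intro mat_dist_append) simp
  finally show ?case using Suc.IH[OF TM(2) TN(2)] cc lc by (simp add: hamming_append)
qed

lemma part1:
  assumes "0 < d" "a * m' \<le> m" "a * w' \<le> w" "w \<le> a * w' + m - a * m'"
  shows "A m' (a * n) w' d \<le> A m n w d"
proof -
  define pad where "pad = replicate (w - a*w') True @ replicate (m - a*m' - (w - a*w')) False"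
  have lp: "length pad = m - a*m'" using assms unfolding pad_def by simp
  have cp: "count_list pad True = w - a*w'" unfolding pad_def by (simp add: count_replicate)
  show ?thesis unfolding A_def
  proof (rule max_code_le[where f = "blocks a pad n"])
    show "finite (Jpow m n w)" by (rule finite_Jpow)
    show "blocks a pad n ` Jpow m' (a * n) w' \<subseteq> Jpow m n w"
      using blocks_Jpow[OF lp cp assms(2,3)] by blast
    show "0 < 2 * d" using assms by simp
    show "\<forall>z. mat_dist z z = 0" by simp
    show "\<forall>x\<in>Jpow m' (a * n) w'. \<forall>y\<in>Jpow m' (a * n) w'. x \<noteq> y \<longrightarrow>
          2 * d \<le> mat_dist x y \<longrightarrow> 2 * d \<le> mat_dist (blocks a pad n x) (blocks a pad n y)"
      using blocks_dist[where m'=m' and a=a and k=n and w'=w' and pad=pad] by simp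
  qed
qed

lemma part3:
  assumes "0 < d"
  shows "A m n w d \<le> B (m * n) (n * w) d"
  unfolding A_def B_def
proof (rule max_code_le[where f = concat])
  show "finite (J (m * n) (n * w))" by (rule finite_J)
  show "concat ` Jpow m n w \<subseteq> J (m * n) (n * w)"
  proof
    fix x assume "x \<in> concat ` Jpow m n w"
    then obtain M where M: "M \<in> Jpow m n w" "x = concat M" by blast
    then have "\<forall>c\<in>set M. length c = m" "\<forall>c\<in>set M. count_list c True = w" "length M = n"
      unfolding Jpow_def J_def by auto
    then show "x \<in> J (m * n) (n * w)" using M(2) length_concat_const[of M m] count_concat_const[of M w]
      unfolding J_def by (simp add: mult.commute)
  qed
  show "0 < 2 * d" using assms by simp
  show "\<forall>z. hamming z z = 0" by simp
  show "\<forall>x\<in>Jpow m n w. \<forall>y\<in>Jpow m n w. x \<noteq> y \<longrightarrow>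
          2 * d \<le> mat_dist x y \<longrightarrow> 2 * d \<le> hamming (concat x) (concat y)"
  proof (intro ballI impI)
    fix x y assume xy: "x \<in> Jpow m n w" "y \<in> Jpow m n w" "2 * d \<le> mat_dist x y"
    have "hamming (concat x) (concat y) = mat_dist x y"
      using xy(1,2) unfolding Jpow_def J_def by (intro hamming_concat) (auto simp: nth_mem)
    then show "2 * d \<le> hamming (concat x) (concat y)" using xy by simp
  qed
qed

definition unitv :: "nat \<Rightarrow> nat \<Rightarrow> bool list" where
  "unitv q s = map (\<lambda>i. i = s) [0..<q]"

lemma count_map_True: "count_list (map P xs) True = length (filter P xs)"
  by (induction xs) auto

lemma unitv_J: "s < q \<Longrightarrow> unitv q s \<in> J q 1"
  unfolding J_def unitv_def by (simp add: count_map_True distinct_length_filter)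

lemma hamming_unitv:
  assumes "s < q" "t < q"
  shows "hamming (unitv q s) (unitv q t) = (if s \<noteq> t then 2 else 0)"
proof -
  have "{i. i < length (unitv q s) \<and> unitv q s ! i \<noteq> unitv q t ! i} = (if s \<noteq> t then {s, t} else {})"
    using assms unfolding unitv_def by auto
  then show ?thesis unfolding hamming_def by simp
qed

lemma part2:
  assumes "0 < d"
  shows "C q (n * w) d \<le> A q (w * n) 1 d"
  unfolding A_def C_def
proof (rule max_code_le[where f = "map (unitv q)"])
  show "finite (Jpow q (w * n) 1)" by (rule finite_Jpow)
  show "map (unitv q) ` qwords q (n * w) \<subseteq> Jpow q (w * n) 1"
    unfolding qwords_def Jpow_def using unitv_J by auto
  show "0 < 2 * d" using assms by simp
  show "\<forall>z. mat_dist z z = 0" by simp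
  show "\<forall>x\<in>qwords q (n * w). \<forall>y\<in>qwords q (n * w). x \<noteq> y \<longrightarrow>
          d \<le> hamming x y \<longrightarrow> 2 * d \<le> mat_dist (map (unitv q) x) (map (unitv q) y)"
  proof (intro ballI impI)
    fix x y assume xy: "x \<in> qwords q (n * w)" "y \<in> qwords q (n * w)" "d \<le> hamming x y"
    have "mat_dist (map (unitv q) x) (map (unitv q) y) =
          (\<Sum>j<length x. hamming (unitv q (x!j)) (unitv q (y!j)))"
      using xy unfolding mat_dist_def qwords_def by simp
    also have "\<dots> = (\<Sum>j<length x. 2 * (if x!j \<noteq> y!j then 1 else 0))"
    proof (rule sum.cong)
      fix j assume "j \<in> {..<length x}"
      then have "x!j < q" "y!j < q" using xy unfolding qwords_def by (auto simp: nth_mem)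
      then show "hamming (unitv q (x!j)) (unitv q (y!j)) = 2 * (if x!j \<noteq> y!j then 1 else 0)"
        by (simp add: hamming_unitv)
    qed simp
    also have "\<dots> = 2 * hamming x y" by (simp add: hamming_sum sum_distrib_left)
    finally show "2 * d \<le> mat_dist (map (unitv q) x) (map (unitv q) y)" using xy by simp
  qed
qed

theorem proposition6:
  fixes m n w d :: nat
  assumes "0 < m" "0 < n" "0 < w" "0 < d" "w \<le> m"
  shows "(\<forall>a m' w'. 0 < a \<and> 0 < m' \<and> 0 < w' \<and> a * m' \<le> m \<and>
            a * w' \<le> w \<and> w \<le> a * w' + m - a * m' \<longrightarrow>
            A m' (a * n) w' d \<le> A m n w d)
       \<and> C (m div w) (n * w) d \<le> A m n w d
       \<and> A m n w d \<le> B (m * n) (n * w) d"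
proof (intro conjI)
  show "\<forall>a m' w'. 0 < a \<and> 0 < m' \<and> 0 < w' \<and> a * m' \<le> m \<and>
            a * w' \<le> w \<and> w \<le> a * w' + m - a * m' \<longrightarrow>
            A m' (a * n) w' d \<le> A m n w d"
    using part1 assms(4) by blast
  have "C (m div w) (n * w) d \<le> A (m div w) (w * n) 1 d" using part2 assms(4) by blast
  also have "\<dots> \<le> A m n w d"
  proof (rule part1)
    show "0 < d" by (rule assms(4))
    have wm: "w * (m div w) \<le> m" by (simp add: mult.commute)
    then show "w * (m div w) \<le> m" .
    show "w * 1 \<le> w" by simp
    show "w \<le> w * 1 + m - w * (m div w)" using wm by linarith
  qed
  finally show "C (m div w) (n * w) d \<le> A m n w d" .
  show "A m n w d \<le> B (m * n) (n * w) d" using part3 assms(4) by blast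
qed

end
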